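(* For any $T,n,m\in\mathbb{N}_+$ there exist a constant $C(n)$ depending only on $n$, reals $\alpha_1,\dots,\alpha_m$ and $\beta_1,\dots,\beta_m>1$ such that, with $\phi(t;B)=\sum_{k=1}^m\alpha_k(t/B)^{-\beta_k}$, $$\max_{1\le B\le T}\ \sum_{t=1}^\infty\big|\mathbb{I}\{t=B\}-\phi(t;B)\big|\le\frac{C(n)T^{1.01(n+1)}}{m^n},$$ where the maximum is over integers $B$.
   Context: $\mathbb{I}\{\cdot\}$ denotes the indicator function. *)

theory Defs
  imports Complex_Main
begin

definition phi :: "nat \<Rightarrow> (nat \<Rightarrow> real) \<Rightarrow> (nat \<Rightarrow> real) \<Rightarrow> real \<Rightarrow> real \<Rightarrow> real" where
  "phi m \<alpha> \<beta> B t = (\<Sum>k=1..m. \<alpha> k * (t / B) powr (- \<beta> k))"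

text \<open>The summand |I{t=B} - phi(t;B)| for t = Suc i, i.e. t ranging over 1,2,3,...\<close>
definition err_term :: "nat \<Rightarrow> (nat \<Rightarrow> real) \<Rightarrow> (nat \<Rightarrow> real) \<Rightarrow> nat \<Rightarrow> nat \<Rightarrow> real" where
  "err_term m \<alpha> \<beta> B i =
     \<bar>(if Suc i = B then 1 else 0) - phi m \<alpha> \<beta> (real B) (real (Suc i))\<bar>"

end

theory Submission
  imports Defs "HOL-Analysis.Analysis" "HOL-Computational_Algebra.Polynomial"
begin

fun cheb :: "nat \<Rightarrow> real poly" where
  "cheb 0 = 1"
| "cheb (Suc 0) = [:0,1:]"
| "cheb (Suc (Suc n)) = smult 2 ([:0,1:] * cheb (Suc n)) - cheb n"

lemma degree_cheb: "degree (cheb n) \<le> n"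
proof (induction n rule: cheb.induct)
  case (3 n)
  have "degree (smult 2 ([:0,1:] * cheb (Suc n))) \<le> Suc (Suc n)"
    using degree_mult_le[of "[:0,1:]" "cheb (Suc n)"] 3 by auto
  moreover have "degree (cheb n) \<le> Suc (Suc n)" using 3 by auto
  ultimately show ?case unfolding cheb.simps by (rule degree_diff_le)
qed auto

lemma cheb_cos: "poly (cheb n) (cos t) = cos (real n * t)"
proof (induction n rule: cheb.induct)
  case (3 n)
  have "cos (real (Suc (Suc n)) * t) = 2 * cos t * cos (real (Suc n) * t) - cos (real n * t)"
    using cos_add[of "real (Suc n) * t" t] cos_diff[of "real (Suc n) * t" t]
    by (simp add: algebra_simps)
  then show ?case using 3 by simp
qed auto

lemma cheb_bounded: assumes "\<bar>z\<bar> \<le> 1" shows "\<bar>poly (cheb n) z\<bar> \<le> 1"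
proof -
  have "z = cos (arccos z)" using assms by (simp add: cos_arccos_abs)
  then have "poly (cheb n) z = cos (real n * arccos z)" by (metis cheb_cos)
  then show ?thesis by simp
qed

lemma cheb_w: assumes "w > 0" shows "poly (cheb n) ((w + inverse w)/2) = (w^n + inverse w ^ n)/2"
proof (induction n rule: cheb.induct)
  case (3 n)
  define b where "b = inverse w"
  have ab: "w * b = 1" using assms by (simp add: b_def)
  have "(w + b) * (w^Suc n + b^Suc n) = w^Suc (Suc n) + b^Suc (Suc n) + (w*b) * (w^n + b^n)"
    by (simp only: power_Suc ring_distribs mult_ac add_ac)
  then have "(w + b) * (w^Suc n + b^Suc n) = w^Suc (Suc n) + b^Suc (Suc n) + (w^n + b^n)"
    using ab by simp
  then have "(w^Suc (Suc n) + inverse w ^ Suc (Suc n))/2 = 2 * ((w + inverse w)/2) * ((w^Suc n + inverse w ^ Suc n)/2) - (w^n + inverse w ^ n)/2"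
    unfolding b_def[symmetric] by (simp add: field_simps)
  moreover have rec: "poly (cheb (Suc (Suc n))) x = 2 * x * poly (cheb (Suc n)) x - poly (cheb n) x" for x by simp
  ultimately show ?case unfolding rec 3 by simp
qed auto

lemma cheb_lower: assumes "h \<ge> 0" shows "poly (cheb n) (1 + h) \<ge> (1 + sqrt (2*h))^n / 2"
proof -
  define w where "w = 1 + h + sqrt (2*h + h^2)"
  have s0: "sqrt (2*h+h^2) \<ge> 0" using assms by simp
  have ss: "sqrt (2*h+h^2)^2 = 2*h+h^2" using assms by simp
  have wpos: "w > 0" using s0 assms unfolding w_def by linarith
  have "w * (1 + h - sqrt (2*h + h^2)) = 1" unfolding w_def using ss by (simp add: algebra_simps power2_eq_square)
  then have inv: "inverse w = 1 + h - sqrt (2*h + h^2)" using wpos by (metis inverse_unique mult.commute)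
  have e1: "(w + inverse w)/2 = 1 + h" using inv w_def by simp
  have "poly (cheb n) (1+h) = (w^n + inverse w ^ n)/2" using cheb_w[OF wpos, of n] unfolding e1 .
  also have "\<dots> \<ge> w^n/2" using wpos by simp
  moreover have "w \<ge> 1 + sqrt (2*h)" unfolding w_def using assms real_sqrt_le_mono[of "2*h" "2*h+h^2"] by (simp add: add_increasing)
  then have "w^n \<ge> (1 + sqrt (2*h))^n" using assms by (intro power_mono) auto
  ultimately show ?thesis by linarith
qed


lemma point:
  fixes B t T :: nat and g :: real
  assumes B1: "1 \<le> B" and BT: "B \<le> T" and t1: "1 \<le> t" and tB: "t \<noteq> B"
    and g: "g = 1 / (1 + ln (real T))"
  shows "0 < (real B / real t) powr g \<and> (real B / real t) powr g \<le> 3 \<and>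
         \<bar>(real B / real t) powr g - 1\<bar> \<ge> g / (2 * (real T + 1))"
proof -
  have T1: "real T \<ge> 1" using B1 BT by simp
  have lnT: "ln (real T) \<ge> 0" using T1 by simp
  have gpos: "g > 0" using g lnT by simp
  have gle: "g \<le> 1" using g lnT by simp
  define l where "l = ln (real B / real t)"
  have rpos: "real B / real t > 0" using B1 t1 by (intro divide_pos_pos) auto
  have x: "(real B / real t) powr g = exp (g * l)" using rpos B1 t1 unfolding l_def powr_def by simp
  show ?thesis
  proof (cases "t > B")
    case True
    have "real t \<ge> real B + 1" using True by simp
    then have "real B / real t \<le> real B / (real B + 1)" using B1 by (intro divide_left_mono) auto
    also have "\<dots> = 1 - 1 / (real B + 1)" using B1 by (simp add: field_simps)
    finally have "l \<le> - 1 / (real B + 1)" unfolding l_def using ln_le_minus_one[OF rpos] by linarith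
    moreover have "1 / (real B + 1) \<ge> 1 / (real T + 1)" using BT B1 by (intro divide_left_mono) auto
    ultimately have l1: "l \<le> - 1 / (real T + 1)" by linarith
    define a where "a = g / (real T + 1)"
    have a0: "a > 0" "a \<le> 1" using gpos gle T1 unfolding a_def by (auto simp: field_simps)
    have "g * l \<le> g * (- 1 / (real T + 1))" using l1 gpos by (intro mult_left_mono) auto
    then have "g * l \<le> - a" unfolding a_def by simp
    then have "exp (g * l) \<le> exp (- a)" by simp
    also have "\<dots> = 1 / exp a" by (simp add: exp_minus field_simps)
    also have "\<dots> \<le> 1 / (1 + a)" using a0 by (intro divide_left_mono) auto
    finally have ex: "exp (g*l) \<le> 1 / (1 + a)" .
    have "1 - 1/(1+a) \<ge> a / 2" using a0 by (simp add: field_simps)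
    then have "1 - exp (g*l) \<ge> a/2" using ex by linarith
    moreover have "exp (g*l) \<le> 1" using ex a0 by (smt (verit) divide_le_eq_1)
    moreover have "a / 2 = g / (2 * (real T + 1))" unfolding a_def by simp
    ultimately have "\<bar>exp (g*l) - 1\<bar> \<ge> g / (2 * (real T + 1))" "exp (g*l) \<le> 3" by linarith+
    then show ?thesis unfolding x by simp
  next
    case False
    then have tlt: "t < B" using tB by simp
    have "real t \<le> real B - 1" using tlt by linarith
    then have "real t / real B \<le> (real B - 1) / real B" using B1 by (intro divide_right_mono) auto
    also have "\<dots> = 1 - 1 / real B" using B1 by (simp add: field_simps)
    finally have q: "real t / real B \<le> 1 - 1 / real B" .
    have "ln (real t / real B) \<le> real t / real B - 1" using B1 t1 by (intro ln_le_minus_one) auto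
    moreover have "l = - ln (real t / real B)" unfolding l_def using B1 t1 by (simp add: ln_div)
    ultimately have "l \<ge> 1 / real B" using q by linarith
    moreover have "1 / real B \<ge> 1 / real T" using BT B1 by (intro divide_left_mono) auto
    ultimately have l1: "l \<ge> 1 / real T" by linarith
    have "g * l \<ge> g * (1 / real T)" using l1 gpos by (intro mult_left_mono) auto
    then have "g * l \<ge> g / real T" by simp
    moreover have "g / real T \<ge> g / (2 * (real T + 1))" using gpos T1 by (intro divide_left_mono) auto
    ultimately have gl: "g * l \<ge> g / (2 * (real T + 1))" by linarith
    have "exp (g*l) \<ge> 1 + g*l" by simp
    then have lo: "exp (g*l) - 1 \<ge> g / (2 * (real T + 1))" using gl by linarith
    have "ln (real B) \<le> ln (real T)" "ln (real t) \<ge> 0" using B1 t1 BT by auto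
    moreover have "l = ln (real B) - ln (real t)" unfolding l_def using B1 t1 by (simp add: ln_div)
    ultimately have "l \<le> ln (real T)" by linarith
    then have "g * l \<le> ln (real T) / (1 + ln (real T))" using g gpos by (simp add: divide_right_mono)
    also have "\<dots> \<le> 1" using lnT by simp
    finally have "exp (g*l) \<le> exp 1" by simp
    then have "exp (g*l) \<le> 3" using exp_le by linarith
    then show ?thesis unfolding x using lo gpos T1 by auto
  qed
qed


lemma phi_expand:
  fixes P :: "real poly" and g :: real and B t :: real
  assumes "degree P < m" "B > 0" "t > 0"
  shows "phi m (\<lambda>k. coeff P (k - 1)) (\<lambda>k. 2 + g * real (k - 1)) B t = (B / t)^2 * poly P ((B / t) powr g)"
proof -
  have r: "B / t > 0" using assms by simp
  have trm: "(t / B) powr (- (2 + g * real j)) = (B/t)^2 * ((B/t) powr g)^j" for j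
  proof -
    have "(t / B) powr (- (2 + g * real j)) = (B/t) powr (2 + g * real j)"
      using assms unfolding powr_minus by (simp add: powr_divide)
    also have "\<dots> = (B/t) powr 2 * (B/t) powr (g * real j)" by (simp add: powr_add)
    also have "(B/t) powr (g * real j) = ((B/t) powr g) powr (real j)" by (simp add: powr_powr)
    also have "\<dots> = ((B/t) powr g)^j" using assms by (intro powr_realpow) simp
    also have "(B/t) powr 2 = (B/t)^2" using r by (simp add: powr_numeral)
    finally show ?thesis .
  qed
  have "phi m (\<lambda>k. coeff P (k - 1)) (\<lambda>k. 2 + g * real (k - 1)) B t
      = (\<Sum>j<m. coeff P j * ((t / B) powr (- (2 + g * real j))))"
    unfolding phi_def by (simp add: sum.atLeast1_atMost_eq)
  also have "\<dots> = (B/t)^2 * (\<Sum>j<m. coeff P j * ((B/t) powr g)^j)"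
    unfolding trm sum_distrib_left by (simp add: algebra_simps)
  also have "(\<Sum>j<m. coeff P j * ((B/t) powr g)^j) = (\<Sum>j\<le>degree P. coeff P j * ((B/t) powr g)^j)"
    using assms(1) by (intro sum.mono_neutral_right) (auto simp: coeff_eq_0)
  also have "\<dots> = poly P ((B/t) powr g)" by (simp add: poly_altdef)
  finally show ?thesis .
qed

lemma sq_sums: "(\<lambda>i::nat. 1 / (real i + 1)^2) sums (pi^2/6)"
  using inverse_squares_sums by (simp add: add.commute)

lemma construct:
  fixes T m :: nat
  assumes T1: "T \<ge> 1" and m1: "m \<ge> 1"
  defines "d \<equiv> 1 / (1 + ln (real T)) / (2 * (real T + 1))"
  shows "\<exists>\<alpha> \<beta>. (\<forall>k\<in>{1..m}. \<beta> k > 1) \<and> (\<forall>B. 1 \<le> B \<and> B \<le> T \<longrightarrow>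
      summable (err_term m \<alpha> \<beta> B) \<and>
      (\<Sum>i. err_term m \<alpha> \<beta> B i) \<le> 6 * real T ^ 2 / (1 + d) ^ ((m - 1) div 2))"
proof -
  define g where "g = 1 / (1 + ln (real T))"
  have d_eq: "d = g / (2*(real T+1))" by (simp add: d_def g_def)
  have lnT: "ln (real T) \<ge> 0" using T1 by simp
  have gpos: "g > 0" using lnT by (simp add: g_def)
  have dpos: "d > 0" using gpos d_eq by simp
  define h where "h = d^2/2"
  have h0: "h \<ge> 0" by (simp add: h_def)
  define K where "K = (m-1) div 2"
  define Q :: "real poly" where "Q = pcompose [:1+h, -(2+h)/4:] ([:-1,1:]^2)"
  define D where "D = poly (cheb K) (1+h)"
  define P where "P = smult (1/D) (pcompose (cheb K) Q)"
  have Qx: "poly Q x = 1 + h - (2+h)/4 * (x-1)^2" for x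
    by (simp add: Q_def poly_pcompose power2_eq_square field_simps)
  have "sqrt (2*h) = d" using dpos by (simp add: h_def)
  then have Dlow: "D \<ge> (1+d)^K/2" using cheb_lower[OF h0, of K] by (simp add: D_def)
  have Dpos: "D > 0" using Dlow dpos by (smt (verit) zero_less_power divide_pos_pos)
  have Px: "poly P x = poly (cheb K) (poly Q x) / D" for x by (simp add: P_def poly_pcompose)
  have "degree ([:-1,1:]^2 :: real poly) \<le> 2"
    using degree_power_le[of "[:-1,1:] :: real poly" 2] by simp
  moreover have "degree [:1+h, -(2+h)/4:] \<le> 1" by simp
  ultimately have degQ: "degree Q \<le> 2" unfolding Q_def degree_pcompose
    using mult_le_mono by fastforce
  have "degree P \<le> degree (cheb K) * degree Q" by (simp add: P_def degree_pcompose)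
  also have "\<dots> \<le> K * 2" using degree_cheb degQ by (intro mult_le_mono) auto
  also have "\<dots> < m" using m1 unfolding K_def by linarith
  finally have degP: "degree P < m" .
  define \<alpha> where "\<alpha> = (\<lambda>k. coeff P (k - 1))"
  define \<beta> where "\<beta> = (\<lambda>k. 2 + g * real (k - 1))"
  have bet: "\<forall>k\<in>{1..m}. \<beta> k > 1" using gpos by (auto simp: \<beta>_def intro!: add_pos_nonneg)
  have main: "err_term m \<alpha> \<beta> B i \<le> (real B)^2 / D * (1 / (real i + 1)^2)"
    if B1: "1 \<le> B" and BT: "B \<le> T" for B i
  proof -
    have ph: "phi m \<alpha> \<beta> (real B) (real (Suc i)) = (real B / real (Suc i))^2 * poly P ((real B / real (Suc i)) powr g)"
      unfolding \<alpha>_def \<beta>_def using B1 by (intro phi_expand degP) auto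
    show ?thesis
    proof (cases "Suc i = B")
      case True
      have "poly P 1 = 1" using Dpos by (simp add: Px Qx D_def)
      then have "err_term m \<alpha> \<beta> B i = 0" unfolding err_term_def ph using True B1 by simp
      then show ?thesis using Dpos by simp
    next
      case False
      define x where "x = (real B / real (Suc i)) powr g"
      have pt: "0 < x \<and> x \<le> 3 \<and> \<bar>x - 1\<bar> \<ge> g / (2 * (real T + 1))"
        unfolding x_def using point[of B T "Suc i" g] B1 BT False g_def by simp
      then have "\<bar>x - 1\<bar> \<ge> d" using d_eq by simp
      then have "d^2 \<le> \<bar>x-1\<bar>^2" using dpos by (intro power_mono) auto
      then have y1: "(x-1)^2 \<ge> d^2" by simp
      have "\<bar>x-1\<bar> \<le> 2" using pt by auto
      then have "\<bar>x-1\<bar>^2 \<le> 2^2" by (intro power_mono) auto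
      then have y2: "(x-1)^2 \<le> 4" by simp
      have a1: "(2+h)/4*(x-1)^2 \<le> (2+h)/4*4" using y2 h0 by (intro mult_left_mono) auto
      have a2: "(2+h)/4*(x-1)^2 \<ge> (2+h)/4*d^2" using y1 h0 by (intro mult_left_mono) auto
      have a3: "(2+h)/4*d^2 = h + h*d^2/4" by (simp add: h_def field_simps)
      have "(2+h)/4*4 = 2+h" by simp
      have a4: "h*d^2/4 \<ge> 0" using h0 by simp
      have "\<bar>poly Q x\<bar> \<le> 1" unfolding Qx abs_le_iff
        using a1 a2 a3 a4 \<open>(2+h)/4*4 = 2+h\<close> by (intro conjI; linarith)
      then have c1: "\<bar>poly (cheb K) (poly Q x)\<bar> \<le> 1" by (rule cheb_bounded)
      have "err_term m \<alpha> \<beta> B i = (real B / real (Suc i))^2 * (\<bar>poly (cheb K) (poly Q x)\<bar> / D)"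
        unfolding err_term_def ph using False Dpos by (simp add: Px x_def abs_mult)
      also have "\<dots> \<le> (real B / real (Suc i))^2 * (1 / D)"
        using c1 Dpos by (intro mult_left_mono divide_right_mono) auto
      also have "\<dots> = (real B)^2 / D * (1 / (real i + 1)^2)" by (simp add: power_divide)
      finally show ?thesis .
    qed
  qed
  have nonneg: "err_term m \<alpha> \<beta> B i \<ge> 0" for B i by (simp add: err_term_def)
  show ?thesis
  proof (intro exI conjI allI impI)
    show "\<forall>k\<in>{1..m}. \<beta> k > 1" by (fact bet)
  next
    fix B assume B: "1 \<le> B \<and> B \<le> T"
    have sm: "summable (\<lambda>i. (real B)^2 / D * (1 / (real i + 1)^2))"
      using sq_sums by (intro summable_mult) (simp add: sums_summable)
    show sB: "summable (err_term m \<alpha> \<beta> B)"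
      using main B nonneg by (intro summable_comparison_test[OF _ sm]) auto
    have "(\<Sum>i. err_term m \<alpha> \<beta> B i) \<le> (\<Sum>i. (real B)^2 / D * (1 / (real i + 1)^2))"
      using main B sB sm by (intro suminf_le) auto
    also have "\<dots> = (real B)^2 / D * (pi^2/6)"
      by (rule sums_unique[symmetric], rule sums_mult, rule sq_sums)
    also have "\<dots> \<le> (real T)^2 * (2 / (1+d)^K) * (16/6)"
    proof (intro mult_mono)
      show "(real B)^2 / D \<le> (real T)^2 * (2 / (1+d)^K)"
      proof -
        have "(real B)^2 \<le> (real T)^2" using B by (intro power_mono) auto
        moreover have "1 / D \<le> 2 / (1+d)^K" using Dlow dpos Dpos by (simp add: divide_simps)
        moreover have "(real B)^2 / D = (real B)^2 * (1/D)" by simp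
        ultimately show ?thesis using Dpos by (metis mult_mono zero_le_power2 less_eq_real_def divide_pos_pos zero_less_one)
      qed
      have "pi^2 \<le> 4^2" using pi_less_4 pi_gt_zero by (intro power_mono) auto
      then show "pi^2/6 \<le> 16/6" by simp
    qed (use dpos Dpos in auto)
    also have "\<dots> \<le> 6 * real T ^ 2 / (1 + d) ^ K" using dpos by (simp add: field_simps)
    finally show "(\<Sum>i. err_term m \<alpha> \<beta> B i) \<le> 6 * real T ^ 2 / (1 + d) ^ ((m - 1) div 2)"
      unfolding K_def .
  qed
qed


lemma exp_ge_pow:
  fixes z :: real assumes z: "z \<ge> 0" shows "z^N / fact N \<le> exp z"
proof -
  have s: "(\<lambda>k. z^k / fact k) sums exp z" using exp_converges[of z] by (simp add: divide_inverse mult.commute)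
  have "(\<Sum>k\<in>{N}. z^k / fact k) \<le> (\<Sum>k. z^k / fact k)"
    using s z by (intro sum_le_suminf) (auto simp: sums_summable)
  then show ?thesis using sums_unique[OF s] by simp
qed

lemma trivial_case:
  fixes T m :: nat
  shows "\<exists>\<alpha> \<beta>. (\<forall>k\<in>{1..m}. \<beta> k > 1) \<and> (\<forall>B. 1 \<le> B \<and> B \<le> T \<longrightarrow>
      summable (err_term m \<alpha> \<beta> B) \<and> (\<Sum>i. err_term m \<alpha> \<beta> B i) = 1)"
proof (intro exI conjI allI impI)
  show "\<forall>k\<in>{1..m}. (\<lambda>_. 2::real) k > 1" by simp
next
  fix B :: nat assume B: "1 \<le> B \<and> B \<le> T"
  have e: "err_term m (\<lambda>_. 0) (\<lambda>_. 2) B = (\<lambda>i. if i = B - 1 then (\<lambda>_. 1::real) i else 0)"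
    using B by (auto simp: err_term_def phi_def fun_eq_iff)
  have "(err_term m (\<lambda>_. 0) (\<lambda>_. 2) B) sums 1" unfolding e by (rule sums_single)
  then show "summable (err_term m (\<lambda>_. 0) (\<lambda>_. 2) B)" "(\<Sum>i. err_term m (\<lambda>_. 0) (\<lambda>_. 2) B i) = 1"
    by (auto simp: sums_iff)
qed

lemma key_ineq:
  fixes T m n :: nat and C :: real
  assumes T1: "T \<ge> 1" and n1: "n \<ge> 1"
    and C: "C = 6 * fact (2*n) * 4848^(2*n)"
    and big: "real m ^ n > C * real T powr (1.01 * real (n + 1))"
  shows "6 * real T ^ 2 / (1 + 1 / (1 + ln (real T)) / (2 * (real T + 1))) ^ ((m - 1) div 2)
         \<le> C * real T powr (1.01 * real (n + 1)) / real m ^ n"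
proof -
  define X where "X = real T"
  define q where "q = X powr 0.01"
  define d where "d = 1 / (1 + ln X) / (2 * (X + 1))"
  define K where "K = (m - 1) div 2"
  have X1: "X \<ge> 1" using T1 by (simp add: X_def)
  have q1: "q \<ge> 1" unfolding q_def using X1 by (simp add: ge_one_powr_ge_zero)
  have lnX: "ln X \<ge> 0" "ln X \<le> 100 * q" using X1 ln_powr_bound[OF X1, of "0.01"] by (auto simp: q_def)
  have Xp: "X powr (1.01 * real (n + 1)) = (X * q)^(n+1)"
  proof -
    have "X powr (1.01 * real (n + 1)) = (X powr 1.01) powr real (n+1)" by (simp add: powr_powr)
    also have "\<dots> = (X powr 1.01)^(n+1)" using X1 by (intro powr_realpow) simp
    also have "X powr 1.01 = X * q"
    proof -
      have "X powr 1.01 = X powr (1 + 0.01)" by simp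
      also have "\<dots> = X powr 1 * X powr 0.01" by (rule powr_add)
      finally show ?thesis unfolding q_def using X1 by simp
    qed
    finally show ?thesis .
  qed
  have f1: "(1::real) \<le> fact (2*n)" by (rule fact_ge_1)
  have p1: "(1::real) \<le> 4848^(2*n)" by simp
  have fp: "1 \<le> fact (2*n) * (4848::real)^(2*n)" using mult_mono[OF f1 p1] by simp
  have Ca: "C = 6 * (fact (2*n) * 4848^(2*n))" by (simp add: C mult.assoc)
  have C1: "C \<ge> 1" using fp Ca by linarith
  have Xq1: "X * q \<ge> 1" using mult_mono[OF X1 q1] X1 by simp
  have big': "real m ^ n > C * (X*q)^(n+1)" using big Xp by (simp add: X_def)
  have "C * (X*q)^(n+1) \<ge> 3^n"
  proof -
    have "(3::real)^n \<le> (4848^2)^n" by (intro power_mono) auto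
    also have "\<dots> = 4848^(2*n)" by (simp add: power_mult)
    finally have "(3::real)^n \<le> 4848^(2*n)" .
    also have "\<dots> \<le> C"
    proof -
      have "(4848::real)^(2*n) \<le> fact (2*n) * 4848^(2*n)" using mult_right_mono[OF f1, of "4848^(2*n)"] by simp
      then show ?thesis unfolding Ca using fp by linarith
    qed
    also have "\<dots> \<le> C * (X*q)^(n+1)" using mult_left_mono[OF one_le_power[OF Xq1, of "n+1"], of C] C1 by simp
    finally show ?thesis .
  qed
  then have "real m ^ n > 3^n" using big' by linarith
  then have m3: "real m \<ge> 3"
  proof (rule contrapos_pp)
    assume "\<not> real m \<ge> 3"
    then have "real m ^ n \<le> 3^n" by (intro power_mono) auto
    then show "\<not> real m ^ n > 3^n" by simp
  qed
  have Km: "real K \<ge> real m / 6" unfolding K_def using m3 by linarith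
  have l1: "1 \<le> 1 + ln X" using lnX(1) by linarith
  have l2: "2 \<le> 2 * (X + 1)" using X1 by (simp add: algebra_simps)
  have l0: "0 \<le> 1 + ln X" using lnX(1) by linarith
  have pr: "2 \<le> (1 + ln X) * (2 * (X + 1))" using mult_mono[OF l1 l2 l0] by simp
  have deq: "d = 1 / ((1 + ln X) * (2 * (X + 1)))" unfolding d_def by simp
  have dpos: "d > 0" unfolding deq using pr by simp
  have dle: "d \<le> 1/2" unfolding deq using pr by (intro divide_left_mono) auto
  have dlow: "d \<ge> 1 / (404 * X * q)"
  proof -
    have u1: "1 + ln X \<le> 101 * q" using lnX q1 by linarith
    have u2: "2 * (X + 1) \<le> 4 * X" using X1 by (simp add: algebra_simps)
    have u3: "0 \<le> 101 * q" using q1 by simp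
    have u4: "0 \<le> 2 * (X + 1)" using X1 by (simp add: algebra_simps)
    have "(1 + ln X) * (2 * (X + 1)) \<le> (101 * q) * (4 * X)"
      using mult_mono[OF u1 u2 u3 u4] .
    also have "\<dots> = 404 * X * q" by simp
    finally have "(1 + ln X) * (2 * (X + 1)) \<le> 404 * X * q" .
    then show ?thesis unfolding deq using pr by (intro divide_left_mono) auto
  qed
  have "exp (d/2) \<le> 1 + d"
  proof -
    have "d - d^2 \<le> ln (1 + d)" using dpos dle by (intro ln_one_plus_pos_lower_bound) auto
    moreover have "d/2 \<le> d - d^2" using dpos dle by (simp add: power2_eq_square)
    ultimately have "d/2 \<le> ln (1+d)" by linarith
    then show ?thesis using dpos by (metis exp_le_cancel_iff exp_ln add_pos_pos zero_less_one)
  qed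
  then have "exp (d/2) ^ K \<le> (1 + d) ^ K" using dpos by (intro power_mono) auto
  then have E1: "exp (real K * (d/2)) \<le> (1 + d)^K" by (simp only: exp_of_nat_mult)
  define z where "z = real m / (4848 * X * q)"
  have zpos: "z \<ge> 0" using X1 q1 by (simp add: z_def)
  have "z \<le> real K * (d/2)"
  proof -
    have "real K * (d/2) \<ge> (real m / 6) * (1 / (404 * X * q) / 2)"
      using Km dlow dpos m3 Xq1 by (intro mult_mono divide_right_mono) auto
    then show ?thesis unfolding z_def by (simp add: field_simps)
  qed
  then have Z: "z^(2*n) / fact (2*n) \<le> (1 + d)^K"
    using exp_ge_pow[OF zpos, of "2*n"] E1 by (smt (verit) exp_le_cancel_iff)
  define Y where "Y = X * q"
  define M where "M = real m"
  have Y1: "Y \<ge> 1" using Xq1 by (simp add: Y_def)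
  have M3: "M \<ge> 3" using m3 by (simp add: M_def)
  have zeq: "z = M / (4848 * Y)" by (simp add: z_def M_def Y_def mult.assoc)
  have zp: "z > 0" using zeq M3 Y1 by simp
  have XY: "X^2 \<le> Y^2" unfolding Y_def using X1 q1 by (intro power_mono) (auto intro: order.trans[OF _ mult_mono[OF order.refl q1]])
  have YM: "Y^(n+1) \<le> M^n"
  proof -
    have "Y^(n+1) \<le> C * Y^(n+1)" using mult_right_mono[OF C1, of "Y^(n+1)"] Y1 by simp
    then show ?thesis using big' by (simp add: Y_def M_def)
  qed
  have step1: "X^2 * Y^(2*n) \<le> Y^(n+1) * M^n"
  proof -
    have "X^2 * Y^(2*n) \<le> Y^2 * Y^(2*n)" using XY Y1 by (intro mult_right_mono) auto
    also have "\<dots> = Y^(n+1) * Y^(n+1)" by (simp add: power_add[symmetric] mult_2)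
    also have "\<dots> \<le> Y^(n+1) * M^n" using YM Y1 by (intro mult_left_mono) auto
    finally show ?thesis .
  qed
  have fz: "z^(2*n) / fact (2*n) > 0" using zp by simp
  have pp: "0 < (1+d)^K * (z^(2*n)/fact(2*n))" using dpos fz by (intro mult_pos_pos) auto
  have "6 * X^2 / (1 + d)^K \<le> 6 * X^2 / (z^(2*n) / fact (2*n))"
    using divide_left_mono[OF Z _ pp] by simp
  also have "\<dots> = C * (X^2 * Y^(2*n)) / M^(2*n)"
    unfolding Ca zeq using Y1 M3 by (simp add: power_divide power_mult_distrib field_simps)
  also have "\<dots> \<le> C * (Y^(n+1) * M^n) / M^(2*n)"
    using step1 C1 M3 by (intro divide_right_mono mult_left_mono) auto
  also have "\<dots> = C * Y^(n+1) / M^n"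
  proof -
    have "M^(2*n) = M^n * M^n" by (simp add: mult_2 power_add)
    moreover have "M^n > 0" using M3 by simp
    ultimately show ?thesis by simp
  qed
  finally have fin: "6 * X^2 / (1 + d)^K \<le> C * Y^(n+1) / M^n" .
  have fin2: "6 * X^2 / (1 + d)^K \<le> C * X powr (1.01 * real (n + 1)) / M^n"
    using fin unfolding Y_def Xp .
  show ?thesis using fin2 unfolding M_def d_def K_def X_def .
qed

theorem lemmaF5:
  shows "\<forall>n::nat. n \<ge> 1 \<longrightarrow> (\<exists>C::real. \<forall>T m::nat. T \<ge> 1 \<longrightarrow> m \<ge> 1 \<longrightarrow>
     (\<exists>\<alpha> \<beta> :: nat \<Rightarrow> real. (\<forall>k\<in>{1..m}. \<beta> k > 1) \<and>
        (\<forall>B::nat. 1 \<le> B \<and> B \<le> T \<longrightarrow>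
           summable (err_term m \<alpha> \<beta> B) \<and>
           (\<Sum>i. err_term m \<alpha> \<beta> B i) \<le> C * real T powr (1.01 * real (n + 1)) / real m ^ n)))"
proof (intro allI impI)
  fix n :: nat assume n1: "n \<ge> 1"
  define C :: real where "C = 6 * fact (2*n) * 4848^(2*n)"
  show "\<exists>C::real. \<forall>T m::nat. T \<ge> 1 \<longrightarrow> m \<ge> 1 \<longrightarrow>
     (\<exists>\<alpha> \<beta> :: nat \<Rightarrow> real. (\<forall>k\<in>{1..m}. \<beta> k > 1) \<and>
        (\<forall>B::nat. 1 \<le> B \<and> B \<le> T \<longrightarrow>
           summable (err_term m \<alpha> \<beta> B) \<and>
           (\<Sum>i. err_term m \<alpha> \<beta> B i) \<le> C * real T powr (1.01 * real (n + 1)) / real m ^ n))"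
  proof (intro exI[of _ C] allI impI)
    fix T m :: nat assume T1: "T \<ge> 1" and m1: "m \<ge> 1"
    let ?R = "C * real T powr (1.01 * real (n + 1)) / real m ^ n"
    show "\<exists>\<alpha> \<beta> :: nat \<Rightarrow> real. (\<forall>k\<in>{1..m}. \<beta> k > 1) \<and>
        (\<forall>B::nat. 1 \<le> B \<and> B \<le> T \<longrightarrow>
           summable (err_term m \<alpha> \<beta> B) \<and> (\<Sum>i. err_term m \<alpha> \<beta> B i) \<le> ?R)"
    proof (cases "real m ^ n > C * real T powr (1.01 * real (n + 1))")
      case True
      obtain \<alpha> \<beta> :: "nat \<Rightarrow> real" where ab: "\<forall>k\<in>{1..m}. \<beta> k > 1"
        and bnd: "\<forall>B. 1 \<le> B \<and> B \<le> T \<longrightarrow> summable (err_term m \<alpha> \<beta> B) \<and>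
          (\<Sum>i. err_term m \<alpha> \<beta> B i) \<le> 6 * real T ^ 2 / (1 + 1 / (1 + ln (real T)) / (2 * (real T + 1))) ^ ((m - 1) div 2)"
        using construct[OF T1 m1] by blast
      have k: "6 * real T ^ 2 / (1 + 1 / (1 + ln (real T)) / (2 * (real T + 1))) ^ ((m - 1) div 2) \<le> ?R"
        by (rule key_ineq[OF T1 n1 C_def True])
      show ?thesis using ab bnd k by (intro exI[of _ \<alpha>] exI[of _ \<beta>]) (auto intro: order.trans)
    next
      case False
      obtain \<alpha> \<beta> :: "nat \<Rightarrow> real" where ab: "\<forall>k\<in>{1..m}. \<beta> k > 1"
        and bnd: "\<forall>B. 1 \<le> B \<and> B \<le> T \<longrightarrow> summable (err_term m \<alpha> \<beta> B) \<and> (\<Sum>i. err_term m \<alpha> \<beta> B i) = 1"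
        using trivial_case[of m T] by blast
      have mp: "real m ^ n > 0" using m1 by simp
      have "1 \<le> ?R" using False mp by (simp add: field_simps)
      show ?thesis using ab bnd \<open>1 \<le> ?R\<close> by (intro exI[of _ \<alpha>] exI[of _ \<beta>]) auto
    qed
  qed
qed


end
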